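(* Let $(Z,Z_{ac})$ be an accretive matrix-ordered vector space and let $((V,V_{ac}),\phi)$ be a $*$-closure of $(Z,Z_{ac})$. Then for all $n$ and $x,y\in M_n(Z)$: (i) $\phi^{(n)}(x)+\phi^{(n)}(y)^*\in V_{ac}^n$ if and only if $x+y\in Z_{ac}^n$; (ii) $\phi^{(n)}(x)+\phi^{(n)}(y)^*=0$ if and only if $x,y\in\operatorname{span}_{\mathbb{C}}Z_{sa}^n$ and $y=-x^*$.
   Context: For a complex vector space $Z$, $M_n(Z)$ is the $n\times n$ matrices over $Z$. A cone is a set $C$ with $C+C\subseteq C$, $tC\subseteq C$ ($t\ge0$). A matrix cone is a sequence of cones $C_n\subseteq M_n(Z)$ with $X^*C_nX\subseteq C_k$ for all scalar $X\in M_{n,k}$; it is $\mathbb{C}$-proper if $C_1\cap-C_1\cap iC_1\cap-iC_1=\{0\}$, and then $(Z,Z_{ac})$, $Z_{ac}=\{Z_{ac}^n\}$, is an accretive matrix-ordered vector space, with $Z_{sa}^n=iZ_{ac}^n\cap-iZ_{ac}^n$ and $Z_+^n=Z_{sa}^n\cap Z_{ac}^n$. For $W=\operatorname{span}_{\mathbb{C}}Z_{sa}^1$, one has $\operatorname{span}_{\mathbb{C}}Z_{sa}^n=M_n(W)$ and there is a unique conjugate-linear involution $*$ on $M_n(W)$ fixing each element of $Z_{sa}^n$, given by $[z_{kl}]^*=[z_{lk}^*]$; this defines $x^*$ in (ii). $(Z,Z_{ac})$ is self-adjoint if $Z=\operatorname{span}_{\mathbb{C}}Z_{sa}^1$ (so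 $Z$ itself carries this involution). A linear map $\phi$ is real-completely positive if $\phi^{(n)}(Z_{ac}^n)\subseteq V_{ac}^n$ for all $n$ ($\phi^{(n)}$ = entrywise application); a real-complete order embedding if injective and both $\phi$ and $\phi^{-1}$ (on the range) are real-completely positive. A $*$-closure of $(Z,Z_{ac})$ is a pair $((V,V_{ac}),\phi)$ with $(V,V_{ac})$ a self-adjoint accretive matrix-ordered vector space, $\phi:Z\to V$ a real-complete order embedding, and $V=\phi(Z)+\phi(Z)^*$ with respect to the involution of $V$. *)

theory Defs
  imports "HOL-Analysis.Analysis" "HOL-Library.Function_Algebras"
begin

text \<open>A complex vector space is modelled as a type 'a :: ab_group_add together with
  a scalar multiplication s :: complex \<Rightarrow> 'a \<Rightarrow> 'a satisfying vector_space s.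
  Matrices over 'a are functions nat \<Rightarrow> nat \<Rightarrow> 'a; M_n is the set of those vanishing
  outside the index square {0..<n} x {0..<n}.\<close>

definition mat_set :: "nat \<Rightarrow> (nat \<Rightarrow> nat \<Rightarrow> 'a::zero) set" where
  "mat_set n = {x. \<forall>i j. n \<le> i \<or> n \<le> j \<longrightarrow> x i j = 0}"

definition mscale :: "(complex \<Rightarrow> 'a \<Rightarrow> 'a) \<Rightarrow> complex \<Rightarrow> (nat \<Rightarrow> nat \<Rightarrow> 'a) \<Rightarrow> (nat \<Rightarrow> nat \<Rightarrow> 'a)" where
  "mscale s c x = (\<lambda>i j. s c (x i j))"

text \<open>X^* x X for a scalar n x k matrix X and x in M_n.\<close>
definition congr :: "(complex \<Rightarrow> 'a \<Rightarrow> 'a) \<Rightarrow> nat \<Rightarrow> nat \<Rightarrow> (nat \<Rightarrow> nat \<Rightarrow> complex)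
    \<Rightarrow> (nat \<Rightarrow> nat \<Rightarrow> 'a::comm_monoid_add) \<Rightarrow> (nat \<Rightarrow> nat \<Rightarrow> 'a)" where
  "congr s n k X x = (\<lambda>i j. if i < k \<and> j < k
      then (\<Sum>p<n. \<Sum>q<n. s (cnj (X p i) * X q j) (x p q)) else 0)"

definition is_cone :: "(complex \<Rightarrow> 'a \<Rightarrow> 'a) \<Rightarrow> (nat \<Rightarrow> nat \<Rightarrow> 'a::plus) set \<Rightarrow> bool" where
  "is_cone s K \<longleftrightarrow> (\<forall>a\<in>K. \<forall>b\<in>K. a + b \<in> K) \<and>
     (\<forall>t::real. t \<ge> 0 \<longrightarrow> (\<forall>a\<in>K. mscale s (complex_of_real t) a \<in> K))"

definition matrix_cone :: "(complex \<Rightarrow> 'a \<Rightarrow> 'a) \<Rightarrow> (nat \<Rightarrow> (nat \<Rightarrow> nat \<Rightarrow> 'a::comm_monoid_add) set) \<Rightarrow> bool" where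
  "matrix_cone s C \<longleftrightarrow> (\<forall>n. C n \<subseteq> mat_set n \<and> is_cone s (C n)) \<and>
     (\<forall>n k X. \<forall>x\<in>C n. congr s n k X x \<in> C k)"

definition C_proper :: "(complex \<Rightarrow> 'a \<Rightarrow> 'a) \<Rightarrow> (nat \<Rightarrow> (nat \<Rightarrow> nat \<Rightarrow> 'a::ab_group_add) set) \<Rightarrow> bool" where
  "C_proper s C \<longleftrightarrow>
     {x \<in> C 1. -x \<in> C 1 \<and> mscale s (-\<i>) x \<in> C 1 \<and> mscale s \<i> x \<in> C 1} = {0}"

definition amovs :: "(complex \<Rightarrow> 'a \<Rightarrow> 'a) \<Rightarrow> (nat \<Rightarrow> (nat \<Rightarrow> nat \<Rightarrow> 'a::ab_group_add) set) \<Rightarrow> bool" where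
  "amovs s C \<longleftrightarrow> vector_space s \<and> matrix_cone s C \<and> C_proper s C"

text \<open>Z_sa^n = i Z_ac^n \<inter> -i Z_ac^n  (x \<in> iC iff -i x \<in> C).\<close>
definition sa :: "(complex \<Rightarrow> 'a \<Rightarrow> 'a) \<Rightarrow> (nat \<Rightarrow> (nat \<Rightarrow> nat \<Rightarrow> 'a) set) \<Rightarrow> nat \<Rightarrow> (nat \<Rightarrow> nat \<Rightarrow> 'a) set" where
  "sa s C n = {x. mscale s (-\<i>) x \<in> C n \<and> mscale s \<i> x \<in> C n}"

definition pos :: "(complex \<Rightarrow> 'a \<Rightarrow> 'a) \<Rightarrow> (nat \<Rightarrow> (nat \<Rightarrow> nat \<Rightarrow> 'a) set) \<Rightarrow> nat \<Rightarrow> (nat \<Rightarrow> nat \<Rightarrow> 'a) set" where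
  "pos s C n = sa s C n \<inter> C n"

definition smat :: "'a::zero \<Rightarrow> (nat \<Rightarrow> nat \<Rightarrow> 'a)" where
  "smat z = (\<lambda>i j. if i = 0 \<and> j = 0 then z else 0)"

text \<open>Z_sa^1 viewed as a subset of Z (1x1 matrices identified with elements).\<close>
definition sa1 :: "(complex \<Rightarrow> 'a \<Rightarrow> 'a) \<Rightarrow> (nat \<Rightarrow> (nat \<Rightarrow> nat \<Rightarrow> 'a::zero) set) \<Rightarrow> 'a set" where
  "sa1 s C = {z. smat z \<in> sa s C 1}"

definition inv1 :: "(complex \<Rightarrow> 'a \<Rightarrow> 'a) \<Rightarrow> (nat \<Rightarrow> (nat \<Rightarrow> nat \<Rightarrow> 'a::ab_group_add) set) \<Rightarrow> 'a \<Rightarrow> 'a" where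
  "inv1 s C z = (SOME w. \<exists>a b. a \<in> sa1 s C \<and> b \<in> sa1 s C \<and> z = a + s \<i> b \<and> w = a - s \<i> b)"

definition madj :: "(complex \<Rightarrow> 'a \<Rightarrow> 'a) \<Rightarrow> (nat \<Rightarrow> (nat \<Rightarrow> nat \<Rightarrow> 'a::ab_group_add) set) \<Rightarrow> nat
    \<Rightarrow> (nat \<Rightarrow> nat \<Rightarrow> 'a) \<Rightarrow> (nat \<Rightarrow> nat \<Rightarrow> 'a)" where
  "madj s C n x = (\<lambda>i j. if i < n \<and> j < n then inv1 s C (x j i) else 0)"

definition self_adjoint :: "(complex \<Rightarrow> 'a \<Rightarrow> 'a) \<Rightarrow> (nat \<Rightarrow> (nat \<Rightarrow> nat \<Rightarrow> 'a::ab_group_add) set) \<Rightarrow> bool" where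
  "self_adjoint s C \<longleftrightarrow> module.span s (sa1 s C) = UNIV"

definition mapn :: "('a \<Rightarrow> 'b) \<Rightarrow> (nat \<Rightarrow> nat \<Rightarrow> 'a) \<Rightarrow> (nat \<Rightarrow> nat \<Rightarrow> 'b)" where
  "mapn f x = (\<lambda>i j. f (x i j))"

definition real_cp :: "(nat \<Rightarrow> (nat \<Rightarrow> nat \<Rightarrow> 'a) set) \<Rightarrow> (nat \<Rightarrow> (nat \<Rightarrow> nat \<Rightarrow> 'b) set) \<Rightarrow> ('a \<Rightarrow> 'b) \<Rightarrow> bool" where
  "real_cp C D f \<longleftrightarrow> (\<forall>n. \<forall>x\<in>C n. mapn f x \<in> D n)"

definition real_coe :: "(nat \<Rightarrow> (nat \<Rightarrow> nat \<Rightarrow> 'a::zero) set) \<Rightarrow> (nat \<Rightarrow> (nat \<Rightarrow> nat \<Rightarrow> 'b) set) \<Rightarrow> ('a \<Rightarrow> 'b) \<Rightarrow> bool" where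
  "real_coe C D f \<longleftrightarrow> inj f \<and> real_cp C D f \<and>
     (\<forall>n. \<forall>x\<in>mat_set n. mapn f x \<in> D n \<longrightarrow> x \<in> C n)"

definition star_closure :: "(complex \<Rightarrow> 'a \<Rightarrow> 'a) \<Rightarrow> (nat \<Rightarrow> (nat \<Rightarrow> nat \<Rightarrow> 'a::ab_group_add) set)
    \<Rightarrow> (complex \<Rightarrow> 'b \<Rightarrow> 'b) \<Rightarrow> (nat \<Rightarrow> (nat \<Rightarrow> nat \<Rightarrow> 'b::ab_group_add) set) \<Rightarrow> ('a \<Rightarrow> 'b) \<Rightarrow> bool" where
  "star_closure sZ C sV D \<phi> \<longleftrightarrow> amovs sV D \<and> self_adjoint sV D \<and> Vector_Spaces.linear sZ sV \<phi> \<and>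
     real_coe C D \<phi> \<and> (\<forall>v. \<exists>a b. v = \<phi> a + inv1 sV D (\<phi> b))"

end

theory Submission
  imports Defs
begin

lemma sum_fun_apply: "(\<Sum>i\<in>A. f i) a b = (\<Sum>i\<in>A. f i a b)"
  by (induction A rule: infinite_finite_induct) auto

lemma mat_set_add: "x \<in> mat_set n \<Longrightarrow> y \<in> mat_set n \<Longrightarrow> (x::nat\<Rightarrow>nat\<Rightarrow>'b::monoid_add) + y \<in> mat_set n"
  by (simp add: mat_set_def)
lemma mat_set_neg: "x \<in> mat_set n \<Longrightarrow> - (x::nat\<Rightarrow>nat\<Rightarrow>'b::group_add) \<in> mat_set n"
  by (simp add: mat_set_def)
lemma mat_set_mapn: "x \<in> mat_set n \<Longrightarrow> f 0 = 0 \<Longrightarrow> mapn f x \<in> mat_set n"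
  by (simp add: mat_set_def mapn_def)

lemma sum_two:
  assumes "k \<noteq> l" "k < (n::nat)" "l < n" "\<And>p. p \<noteq> k \<Longrightarrow> p \<noteq> l \<Longrightarrow> f p = 0"
  shows "(\<Sum>p<n. f p) = f k + (f l :: 'a::comm_monoid_add)"
proof -
  have "(\<Sum>p<n. f p) = (\<Sum>p\<in>{k,l}. f p)"
  proof (rule sum.mono_neutral_right)
    show "\<forall>i\<in>{..<n} - {k, l}. f i = 0" using assms(4) by blast
  qed (use assms in auto)
  thus ?thesis using assms by simp
qed

context fixes s :: "complex \<Rightarrow> 'a::ab_group_add \<Rightarrow> 'a" and C
  assumes AM: "amovs s C"
begin

interpretation vs: vector_space s using AM by (simp add: amovs_def)

lemma mscale_mscale: "mscale s a (mscale s b x) = mscale s (a*b) x"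
  by (simp add: mscale_def)
lemma mscale_add: "mscale s a (x + y) = mscale s a x + mscale s a y"
  by (simp add: mscale_def fun_eq_iff vs.scale_right_distrib)
lemma mscale_neg: "mscale s a (- x) = - mscale s a x"
  by (simp add: mscale_def fun_eq_iff)
lemma neg_mscale: "- mscale s a x = mscale s (-a) x"
  by (simp add: mscale_def fun_eq_iff)
lemma mscale_one: "mscale s 1 x = x"
  by (simp add: mscale_def fun_eq_iff)

lemma C_mat: "C n \<subseteq> mat_set n"
  using AM by (simp add: amovs_def matrix_cone_def)
lemma C_add: "a \<in> C n \<Longrightarrow> b \<in> C n \<Longrightarrow> a + b \<in> C n"
  using AM by (simp add: amovs_def matrix_cone_def is_cone_def)
lemma C_scale: "t \<ge> 0 \<Longrightarrow> a \<in> C n \<Longrightarrow> mscale s (complex_of_real t) a \<in> C n"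
  using AM by (simp add: amovs_def matrix_cone_def is_cone_def)
lemma C_congr: "x \<in> C n \<Longrightarrow> congr s n k X x \<in> C k"
  using AM by (simp add: amovs_def matrix_cone_def)

lemma C1_zero: "0 \<in> C 1"
  using AM unfolding amovs_def C_proper_def by blast

lemma C_zero: "0 \<in> C n"
proof -
  have "congr s 1 n (\<lambda>_ _. 0) 0 \<in> C n" by (rule C_congr[OF C1_zero])
  moreover have "congr s 1 n (\<lambda>_ _. 0) 0 = 0" by (simp add: congr_def fun_eq_iff)
  ultimately show ?thesis by simp
qed

lemma congr_mscale: "congr s n k X (mscale s c x) = mscale s c (congr s n k X x)"
  by (simp add: congr_def mscale_def fun_eq_iff vs.scale_sum_right mult.commute)

lemma sa_iff: "x \<in> sa s C n \<longleftrightarrow> mscale s (-\<i>) x \<in> C n \<and> mscale s \<i> x \<in> C n"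
  by (simp add: sa_def)

lemma sa_mat: "x \<in> sa s C n \<Longrightarrow> x \<in> mat_set n"
proof -
  assume "x \<in> sa s C n"
  hence "mscale s \<i> x \<in> mat_set n" using C_mat by (auto simp: sa_def)
  hence "mscale s (-\<i>) (mscale s \<i> x) \<in> mat_set n" by (simp add: mat_set_def mscale_def)
  thus ?thesis by (simp add: mscale_mscale mscale_one)
qed

lemma sa_zero: "0 \<in> sa s C n"
  using C_zero by (simp add: sa_def mscale_def zero_fun_def[symmetric])

lemma sa_add: "x \<in> sa s C n \<Longrightarrow> y \<in> sa s C n \<Longrightarrow> x + y \<in> sa s C n"
  by (simp add: sa_def mscale_add C_add)

lemma sa_neg: "x \<in> sa s C n \<Longrightarrow> - x \<in> sa s C n"
  by (simp add: sa_def mscale_neg neg_mscale)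

lemma sa_diff: "x \<in> sa s C n \<Longrightarrow> y \<in> sa s C n \<Longrightarrow> x - y \<in> sa s C n"
  using sa_add[OF _ sa_neg] by (metis diff_conv_add_uminus)

lemma sa_real: "x \<in> sa s C n \<Longrightarrow> mscale s (complex_of_real r) x \<in> sa s C n"
proof (cases "r \<ge> 0")
  case True
  assume x: "x \<in> sa s C n"
  have "mscale s (-\<i>) (mscale s (complex_of_real r) x) = mscale s (complex_of_real r) (mscale s (-\<i>) x)"
   "mscale s \<i> (mscale s (complex_of_real r) x) = mscale s (complex_of_real r) (mscale s \<i> x)"
    by (simp_all add: mscale_mscale mult.commute)
  thus ?thesis using x True C_scale by (simp add: sa_def)
next
  case False
  assume x: "x \<in> sa s C n"
  have "mscale s (-\<i>) (mscale s (complex_of_real r) x) = mscale s (complex_of_real (-r)) (mscale s \<i> x)"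
   "mscale s \<i> (mscale s (complex_of_real r) x) = mscale s (complex_of_real (-r)) (mscale s (-\<i>) x)"
    by (simp_all add: mscale_mscale mult.commute)
  moreover have "mscale s (complex_of_real (-r)) (mscale s \<i> x) \<in> C n"
     "mscale s (complex_of_real (-r)) (mscale s (-\<i>) x) \<in> C n"
    using x False C_scale[of "-r" "mscale s \<i> x" n] C_scale[of "-r" "mscale s (-\<i>) x" n]
    by (auto simp: sa_def simp del: of_real_minus)
  ultimately show ?thesis by (simp only: sa_def mem_Collect_eq)
qed

lemma sa_sum: "(\<And>i. i \<in> A \<Longrightarrow> f i \<in> sa s C n) \<Longrightarrow> sum f A \<in> sa s C n"
  by (induction A rule: infinite_finite_induct) (auto intro: sa_add sa_zero)

lemma sa_congr: "x \<in> sa s C n \<Longrightarrow> congr s n k X x \<in> sa s C k"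
  by (simp add: sa_def congr_mscale[symmetric] C_congr)

lemma smat_add: "smat ((a::'a) + b) = smat a + smat b"
  by (auto simp: smat_def fun_eq_iff)
lemma smat_neg: "smat (- (a::'a)) = - smat a"
  by (auto simp: smat_def fun_eq_iff)
lemma smat_scale: "smat (s c a) = mscale s c (smat a)"
  by (simp add: smat_def mscale_def fun_eq_iff)
lemma smat_zero: "smat 0 = 0"
  by (simp add: smat_def fun_eq_iff)
lemma smat_inj: "smat a = smat b \<Longrightarrow> a = b"
  by (metis smat_def)

lemma sa1_add: "a \<in> sa1 s C \<Longrightarrow> b \<in> sa1 s C \<Longrightarrow> a + b \<in> sa1 s C"
  by (simp add: sa1_def smat_add sa_add)
lemma sa1_neg: "a \<in> sa1 s C \<Longrightarrow> - a \<in> sa1 s C"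
  by (simp add: sa1_def smat_neg sa_neg)
lemma sa1_diff: "a \<in> sa1 s C \<Longrightarrow> b \<in> sa1 s C \<Longrightarrow> a - b \<in> sa1 s C"
  by (metis diff_conv_add_uminus sa1_add sa1_neg)
lemma sa1_zero: "0 \<in> sa1 s C"
  by (simp add: sa1_def smat_zero sa_zero)
lemma sa1_real: "a \<in> sa1 s C \<Longrightarrow> s (complex_of_real r) a \<in> sa1 s C"
  by (simp add: sa1_def smat_scale sa_real)

lemma sa1_unique0:
  assumes z: "z \<in> sa1 s C" and t: "t \<in> sa1 s C" and e: "z = s \<i> t"
  shows "z = 0"
proof -
  have a: "mscale s (-\<i>) (smat z) \<in> C 1" "mscale s \<i> (smat z) \<in> C 1"
    using z by (auto simp: sa1_def sa_def)
  have b: "mscale s (-\<i>) (smat t) \<in> C 1" "mscale s \<i> (smat t) \<in> C 1"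
    using t by (auto simp: sa1_def sa_def)
  have c: "smat z \<in> C 1" "- smat z \<in> C 1"
    using b by (simp_all add: e smat_scale neg_mscale)
  have "smat z \<in> {x \<in> C 1. -x \<in> C 1 \<and> mscale s (-\<i>) x \<in> C 1 \<and> mscale s \<i> x \<in> C 1}"
    using a c by simp
  hence "smat z = 0" using AM unfolding amovs_def C_proper_def by blast
  thus ?thesis using smat_inj smat_zero by metis
qed

lemma sa1_unique:
  assumes "p \<in> sa1 s C" "q \<in> sa1 s C" "p' \<in> sa1 s C" "q' \<in> sa1 s C"
    and e: "p + s \<i> q = p' + s \<i> q'"
  shows "p = p' \<and> q = q'"
proof -
  have pq: "p - p' = s \<i> (q' - q)" using e
    by (simp add: vs.scale_right_diff_distrib algebra_simps)
  hence z: "p - p' = 0" using sa1_unique0[OF sa1_diff sa1_diff] assms by blast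
  hence "s \<i> (q' - q) = 0" using pq by simp
  hence "s (-\<i>) (s \<i> (q' - q)) = 0" by simp
  hence "q' - q = 0" by simp
  thus ?thesis using z by simp
qed

lemma inv1_eq:
  assumes "p \<in> sa1 s C" "q \<in> sa1 s C"
  shows "inv1 s C (p + s \<i> q) = p - s \<i> q"
proof -
  let ?P = "\<lambda>w. \<exists>a b. a \<in> sa1 s C \<and> b \<in> sa1 s C \<and> p + s \<i> q = a + s \<i> b \<and> w = a - s \<i> b"
  have "?P (p - s \<i> q)" using assms by blast
  hence "?P (SOME w. ?P w)" by (rule someI)
  then obtain a b where ab: "a \<in> sa1 s C" "b \<in> sa1 s C" "p + s \<i> q = a + s \<i> b"
     "(SOME w. ?P w) = a - s \<i> b" by blast
  from sa1_unique[OF assms ab(1,2,3)] ab(4) show ?thesis by (simp add: inv1_def)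
qed

lemma inv1_zero: "inv1 s C 0 = 0"
  using inv1_eq[OF sa1_zero sa1_zero] by simp

lemma compr:
  assumes "x \<in> sa s C n"
  shows "smat (\<Sum>p<n. \<Sum>q<n. s (cnj (v p) * v q) (x p q)) \<in> sa s C 1"
proof -
  have "congr s n 1 (\<lambda>p _. v p) x \<in> sa s C 1" by (rule sa_congr[OF assms])
  moreover have "congr s n 1 (\<lambda>p _. v p) x = smat (\<Sum>p<n. \<Sum>q<n. s (cnj (v p) * v q) (x p q))"
    by (simp add: congr_def smat_def fun_eq_iff)
  ultimately show ?thesis by simp
qed


lemma compr2:
  assumes x: "x \<in> sa s C n" and kl: "k \<noteq> l" "k < n" "l < n"
  shows "x k k + s \<alpha> (x k l) + (s (cnj \<alpha>) (x l k) + s (cnj \<alpha> * \<alpha>) (x l l)) \<in> sa1 s C"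
proof -
  define v where "v = (\<lambda>m. if m = k then 1 else if m = l then \<alpha> else 0)"
  have inner: "(\<Sum>q<n. s (cnj (v p) * v q) (x p q)) = s (cnj (v p)) (x p k) + s (cnj (v p) * \<alpha>) (x p l)" for p
    using kl by (subst sum_two[OF kl]) (auto simp: v_def)
  have "(\<Sum>p<n. \<Sum>q<n. s (cnj (v p) * v q) (x p q)) =
     (\<Sum>q<n. s (cnj (v k) * v q) (x k q)) + (\<Sum>q<n. s (cnj (v l) * v q) (x l q))"
    by (rule sum_two[OF kl]) (simp add: v_def)
  also have "\<dots> = x k k + s \<alpha> (x k l) + (s (cnj \<alpha>) (x l k) + s (cnj \<alpha> * \<alpha>) (x l l))"
    unfolding inner using kl by (simp add: v_def)
  finally show ?thesis using compr[OF x, of v] by (simp add: sa1_def)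
qed

lemma sa_diag: "x \<in> sa s C n \<Longrightarrow> k < n \<Longrightarrow> x k k \<in> sa1 s C"
proof -
  assume x: "x \<in> sa s C n" and k: "k < n"
  have "smat (\<Sum>p<n. \<Sum>q<n. s (cnj (if p = k then 1 else 0) * (if q = k then 1 else 0)) (x p q)) \<in> sa s C 1"
    by (rule compr[OF x])
  moreover have "(\<Sum>p<n. \<Sum>q<n. s (cnj (if p = k then 1 else 0) * (if q = k then 1 else 0)) (x p q)) = x k k"
  proof -
    have e: "s (cnj (if p = k then 1 else 0) * (if q = k then 1 else 0)) (x p q)
       = (if q = k then (if p = k then x p q else 0) else 0)" for p q by simp
    show ?thesis unfolding e using k by (simp add: sum.delta)
  qed
  ultimately show ?thesis by (simp add: sa1_def)
qed

lemma sa_entries: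
  assumes x: "x \<in> sa s C n" and kl: "k < n" "l < n"
  shows "\<exists>p q. p \<in> sa1 s C \<and> q \<in> sa1 s C \<and> x k l = p + s \<i> q \<and> x l k = p - s \<i> q"
proof (cases "k = l")
  case True
  thus ?thesis using sa_diag[OF x kl(1)] sa1_zero by (intro exI[of _ "x k k"] exI[of _ 0]) auto
next
  case False
  have d: "x k k \<in> sa1 s C" "x l l \<in> sa1 s C" using sa_diag[OF x] kl by auto
  have A0: "x k k + s 1 (x k l) + (s (cnj 1) (x l k) + s (cnj 1 * 1) (x l l)) \<in> sa1 s C"
    by (rule compr2[OF x False kl])
  have B0: "x k k + s \<i> (x k l) + (s (cnj \<i>) (x l k) + s (cnj \<i> * \<i>) (x l l)) \<in> sa1 s C"
    by (rule compr2[OF x False kl])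
  define A where "A = x k l + x l k"
  define B where "B = s \<i> (x k l) - s \<i> (x l k)"
  have A: "A \<in> sa1 s C"
  proof -
    have "A = (x k k + s 1 (x k l) + (s (cnj 1) (x l k) + s (cnj 1 * 1) (x l l))) - x k k - x l l"
      by (simp add: A_def)
    thus ?thesis using A0 d sa1_diff by metis
  qed
  have B: "B \<in> sa1 s C"
  proof -
    have "B = (x k k + s \<i> (x k l) + (s (cnj \<i>) (x l k) + s (cnj \<i> * \<i>) (x l l))) - x k k - x l l"
      by (simp add: B_def)
    thus ?thesis using B0 d sa1_diff by metis
  qed
  define p where "p = s (complex_of_real (1/2)) A"
  define q where "q = s (complex_of_real (-1/2)) B"
  have "p \<in> sa1 s C" unfolding p_def by (rule sa1_real[OF A])
  moreover have "q \<in> sa1 s C" unfolding q_def by (rule sa1_real[OF B])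
  moreover have "x k l = p + s \<i> q" "x l k = p - s \<i> q"
    by (simp_all add: p_def q_def A_def B_def vs.scale_right_diff_distrib vs.scale_right_distrib
        vs.scale_left_distrib[symmetric] vs.scale_left_diff_distrib[symmetric])
  ultimately show ?thesis by blast
qed


lemma madj_sa:
  assumes a: "a \<in> sa s C n" and b: "b \<in> sa s C n"
  shows "madj s C n (a + mscale s \<i> b) = a - mscale s \<i> b"
proof (rule ext, rule ext)
  fix k l
  show "madj s C n (a + mscale s \<i> b) k l = (a - mscale s \<i> b) k l"
  proof (cases "k < n \<and> l < n")
    case True
    obtain p q where pq: "p \<in> sa1 s C" "q \<in> sa1 s C" "a k l = p + s \<i> q" "a l k = p - s \<i> q"
      using sa_entries[OF a, of k l] True by blast
    obtain p' q' where pq': "p' \<in> sa1 s C" "q' \<in> sa1 s C" "b k l = p' + s \<i> q'" "b l k = p' - s \<i> q'"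
      using sa_entries[OF b, of k l] True by blast
    have "a l k + s \<i> (b l k) = (p + q') + s \<i> (p' - q)"
      by (simp add: pq pq' vs.scale_right_diff_distrib vs.scale_right_distrib)
    hence "inv1 s C (a l k + s \<i> (b l k)) = (p + q') - s \<i> (p' - q)"
      using inv1_eq[OF sa1_add[OF pq(1) pq'(2)] sa1_diff[OF pq'(1) pq(2)]] by simp
    also have "\<dots> = a k l - s \<i> (b k l)"
      by (simp add: pq pq' vs.scale_right_diff_distrib vs.scale_right_distrib)
    finally show ?thesis using True by (simp add: madj_def mscale_def)
  next
    case False
    hence "a k l = 0" "b k l = 0" using sa_mat[OF a] sa_mat[OF b] by (auto simp: mat_set_def)
    thus ?thesis using False by (auto simp: madj_def mscale_def)
  qed
qed

lemma module_mscale: "module (mscale s)"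
  by unfold_locales (simp_all add: mscale_def fun_eq_iff vs.scale_right_distrib vs.scale_left_distrib)

lemma cdecomp: "s c z = s (complex_of_real (Re c)) z + s \<i> (s (complex_of_real (Im c)) z)"
proof -
  have "c = complex_of_real (Re c) + \<i> * complex_of_real (Im c)" by (simp add: complex_eq_iff)
  hence "s c z = s (complex_of_real (Re c) + \<i> * complex_of_real (Im c)) z" by simp
  thus ?thesis by (simp add: vs.scale_left_distrib)
qed

lemma span_sa:
  assumes "x \<in> module.span (mscale s) (sa s C n)"
  shows "\<exists>a b. a \<in> sa s C n \<and> b \<in> sa s C n \<and> x = a + mscale s \<i> b"
proof -
  interpret ms: module "mscale s" by (rule module_mscale)
  show ?thesis
  proof (rule ms.span_induct[OF assms, of "\<lambda>x. \<exists>a b. a \<in> sa s C n \<and> b \<in> sa s C n \<and> x = a + mscale s \<i> b"])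
    fix x assume "x \<in> sa s C n"
    thus "\<exists>a b. a \<in> sa s C n \<and> b \<in> sa s C n \<and> x = a + mscale s \<i> b"
    proof -
      have "x = x + mscale s \<i> 0" by (simp add: mscale_def fun_eq_iff)
      thus ?thesis using sa_zero \<open>x \<in> sa s C n\<close> by blast
    qed
  next
    define K where "K = {x. \<exists>a b. a \<in> sa s C n \<and> b \<in> sa s C n \<and> x = a + mscale s \<i> b}"
    have z: "(0::nat\<Rightarrow>nat\<Rightarrow>'a) = 0 + mscale s \<i> 0" by (simp add: mscale_def fun_eq_iff)
    have K0: "0 \<in> K" unfolding K_def using sa_zero z by blast
    have Kadd: "x + y \<in> K" if xK: "x \<in> K" "y \<in> K" for x y
    proof -
      obtain a b a' b' where h: "a \<in> sa s C n" "b \<in> sa s C n" "a' \<in> sa s C n" "b' \<in> sa s C n"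
        "x = a + mscale s \<i> b" "y = a' + mscale s \<i> b'" using xK unfolding K_def by blast
      have "x + y = (a + a') + mscale s \<i> (b + b')"
        by (simp add: h mscale_def fun_eq_iff vs.scale_right_distrib)
      thus ?thesis unfolding K_def using h sa_add by blast
    qed
    have Kscale: "mscale s c x \<in> K" if xK: "x \<in> K" for x c
    proof -
      obtain a b where h: "a \<in> sa s C n" "b \<in> sa s C n" "x = a + mscale s \<i> b"
        using xK unfolding K_def by blast
      let ?r = "\<lambda>t. complex_of_real t"
      have 1: "mscale s (?r (Re c)) a - mscale s (?r (Im c)) b \<in> sa s C n"
        using h by (intro sa_diff sa_real)
      have 2: "mscale s (?r (Im c)) a + mscale s (?r (Re c)) b \<in> sa s C n"
        using h by (intro sa_add sa_real)
      have 3: "mscale s c (a + mscale s \<i> b) = mscale s (?r (Re c)) a - mscale s (?r (Im c)) b +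
            mscale s \<i> (mscale s (?r (Im c)) a + mscale s (?r (Re c)) b)"
      proof (rule ext, rule ext)
        fix k l
        show "mscale s c (a + mscale s \<i> b) k l = (mscale s (?r (Re c)) a - mscale s (?r (Im c)) b +
          mscale s \<i> (mscale s (?r (Im c)) a + mscale s (?r (Re c)) b)) k l"
        proof -
          have e1: "s c z = s (?r (Re c)) z + s (\<i> * ?r (Im c)) z" for z
            using cdecomp[of c z] by simp
          have "c * \<i> = \<i> * ?r (Re c) - ?r (Im c)" by (simp add: complex_eq_iff)
          hence e2: "s (c * \<i>) z = s (\<i> * ?r (Re c)) z - s (?r (Im c)) z" for z
            by (simp add: vs.scale_left_diff_distrib)
          show ?thesis by (simp add: mscale_def vs.scale_right_distrib e1 e2)
        qed
      qed
      show ?thesis unfolding K_def using 1 2 3 h(3) by blast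
    qed
    show "ms.subspace {x. \<exists>a b. a \<in> sa s C n \<and> b \<in> sa s C n \<and> x = a + mscale s \<i> b}"
      unfolding ms.subspace_def K_def[symmetric] using K0 Kadd Kscale by blast
  qed
qed

lemma sa_in_span: "a \<in> sa s C n \<Longrightarrow> b \<in> sa s C n \<Longrightarrow> a + mscale s \<i> b \<in> module.span (mscale s) (sa s C n)"
proof -
  interpret ms: module "mscale s" by (rule module_mscale)
  assume "a \<in> sa s C n" "b \<in> sa s C n"
  thus ?thesis by (intro ms.span_add ms.span_base ms.span_scale)
qed


definition NN :: "nat \<Rightarrow> (nat \<Rightarrow> nat \<Rightarrow> 'a) set" where
  "NN n = {x. x \<in> C n \<and> - x \<in> C n}"

lemma NN_add: "x \<in> NN n \<Longrightarrow> y \<in> NN n \<Longrightarrow> x + y \<in> NN n"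
proof -
  assume "x \<in> NN n" "y \<in> NN n"
  moreover have "- (x + y) = - x + - y" by simp
  ultimately show ?thesis unfolding NN_def using C_add by (metis mem_Collect_eq)
qed
lemma NN_neg: "x \<in> NN n \<Longrightarrow> - x \<in> NN n"
  by (simp add: NN_def)
lemma NN_diff: "x \<in> NN n \<Longrightarrow> y \<in> NN n \<Longrightarrow> x - y \<in> NN n"
  by (metis NN_add NN_neg diff_conv_add_uminus)
lemma NN_zero: "0 \<in> NN n"
  using C_zero by (simp add: NN_def)
lemma NN_sum: "(\<And>i. i \<in> A \<Longrightarrow> f i \<in> NN n) \<Longrightarrow> sum f A \<in> NN n"
  by (induction A rule: infinite_finite_induct) (auto intro: NN_add NN_zero)

definition GG :: "nat \<Rightarrow> (nat \<Rightarrow> complex) \<Rightarrow> 'a \<Rightarrow> (nat \<Rightarrow> nat \<Rightarrow> 'a)" where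
  "GG n v z = (\<lambda>a b. if a < n \<and> b < n then s (cnj (v a) * v b) z else 0)"

lemma GG_NN: assumes "smat z \<in> NN 1" shows "GG n v z \<in> NN n"
proof -
  have c: "congr s 1 n (\<lambda>_ b. v b) (smat z) = GG n v z"
    by (simp add: congr_def smat_def GG_def fun_eq_iff)
  have "congr s 1 n (\<lambda>_ b. v b) (smat z) \<in> C n" using assms C_congr by (simp add: NN_def)
  moreover have "congr s 1 n (\<lambda>_ b. v b) (mscale s (-1) (smat z)) \<in> C n"
    using assms C_congr by (simp add: NN_def neg_mscale[symmetric] mscale_one)
  ultimately show ?thesis unfolding NN_def c congr_mscale
    by (simp add: neg_mscale[symmetric] mscale_one)
qed

lemma sa1_NN: "p \<in> sa1 s C \<Longrightarrow> smat (s \<i> p) \<in> NN 1"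
  by (simp add: sa1_def sa_def NN_def smat_scale neg_mscale)

lemma s2: "s 2 z = z + z"
proof -
  have "s (1 + 1) z = z + z" by (simp only: vs.scale_left_distrib vs.scale_one)
  thus ?thesis by simp
qed

lemma GG3: "GG n v1 z - GG n v2 z - GG n v3 z =
   (\<lambda>a b. if a < n \<and> b < n then s (cnj (v1 a) * v1 b - cnj (v2 a) * v2 b - cnj (v3 a) * v3 b) z else 0)"
  by (simp add: GG_def fun_eq_iff vs.scale_left_diff_distrib)

lemma EE_NN:
  assumes "smat z \<in> NN 1"
  shows "(\<lambda>a b. if a < n \<and> b < n then (if i = a then (if j = b then z else 0) else 0)
             + (if i = b then (if j = a then z else 0) else 0) else 0) \<in> NN n"
proof -
  let ?v1 = "\<lambda>m. (if m = i then 1 else 0) + (if m = j then 1 else (0::complex))"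
  let ?v2 = "\<lambda>m. (if m = i then 1 else (0::complex))"
  let ?v3 = "\<lambda>m. (if m = j then 1 else (0::complex))"
  have "GG n ?v1 z - GG n ?v2 z - GG n ?v3 z \<in> NN n"
    using GG_NN[OF assms] by (intro NN_diff)
  moreover have "GG n ?v1 z - GG n ?v2 z - GG n ?v3 z = (\<lambda>a b. if a < n \<and> b < n then (if i = a then (if j = b then z else 0) else 0)
             + (if i = b then (if j = a then z else 0) else 0) else 0)"
    unfolding GG3
    by (rule ext, rule ext) (auto simp: s2)
  ultimately show ?thesis by simp
qed

lemma cc_aux: "(1 - \<i>) * (1 + \<i>) = (2::complex)"
  by (simp add: complex_eq_iff)

lemma FF_NN:
  assumes "p \<in> sa1 s C"
  shows "(\<lambda>a b. if a < n \<and> b < n then (if i = a then (if j = b then p else 0) else 0)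
             + (if i = b then (if j = a then - p else 0) else 0) else 0) \<in> NN n"
proof -
  let ?v1 = "\<lambda>m. (if m = i then 1 else 0) + (if m = j then \<i> else (0::complex))"
  let ?v2 = "\<lambda>m. (if m = i then 1 else (0::complex))"
  let ?v3 = "\<lambda>m. (if m = j then 1 else (0::complex))"
  have "-(GG n ?v1 (s \<i> p) - GG n ?v2 (s \<i> p) - GG n ?v3 (s \<i> p)) \<in> NN n"
    using GG_NN[OF sa1_NN[OF assms]] by (intro NN_diff NN_neg)
  moreover have "-(GG n ?v1 (s \<i> p) - GG n ?v2 (s \<i> p) - GG n ?v3 (s \<i> p)) = (\<lambda>a b. if a < n \<and> b < n then (if i = a then (if j = b then p else 0) else 0)
             + (if i = b then (if j = a then - p else 0) else 0) else 0)"
    unfolding GG3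
    by (rule ext, rule ext) (auto simp: s2 cc_aux)
  ultimately show ?thesis by simp
qed


lemma T_NN:
  assumes SA: "\<forall>z. \<exists>p q. p \<in> sa1 s C \<and> q \<in> sa1 s C \<and> z = p + s \<i> q"
    and w: "w \<in> mat_set n"
  shows "w - madj s C n w \<in> NN n"
proof -
  obtain P Q where PQ: "\<And>z. P z \<in> sa1 s C" "\<And>z. Q z \<in> sa1 s C" "\<And>z. z = P z + s \<i> (Q z)"
    using SA by metis
  have inv: "inv1 s C z = P z - s \<i> (Q z)" for z
    using inv1_eq[OF PQ(1,2), of z z] PQ(3)[of z] by simp
  define M where "M = (\<lambda>i j. (\<lambda>a b. if a < n \<and> b < n then (if i = a then (if j = b then P (w i j) else 0) else 0)
             + (if i = b then (if j = a then - P (w i j) else 0) else 0) else 0) +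
        (\<lambda>a b. if a < n \<and> b < n then (if i = a then (if j = b then s \<i> (Q (w i j)) else 0) else 0)
             + (if i = b then (if j = a then s \<i> (Q (w i j)) else 0) else 0) else 0))"
  have MN: "M i j \<in> NN n" for i j
    unfolding M_def by (intro NN_add FF_NN EE_NN sa1_NN PQ)
  have Mab: "M i j a b = (if j = b then (if i = a then P (w i j) + s \<i> (Q (w i j)) else 0) else 0)
       + (if j = a then (if i = b then - P (w i j) + s \<i> (Q (w i j)) else 0) else 0)"
    if "a < n" "b < n" for i j a b
    using that by (auto simp: M_def)
  have "w - madj s C n w = (\<Sum>i<n. \<Sum>j<n. M i j)"
  proof (rule ext, rule ext)
    fix a b
    show "(w - madj s C n w) a b = (\<Sum>i<n. \<Sum>j<n. M i j) a b"
    proof (cases "a < n \<and> b < n")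
      case True
      have "(\<Sum>i<n. \<Sum>j<n. M i j) a b = (\<Sum>i<n. \<Sum>j<n. M i j a b)"
        by (simp add: sum_fun_apply)
      also have "\<dots> = (P (w a b) + s \<i> (Q (w a b))) + (- P (w b a) + s \<i> (Q (w b a)))"
        using True by (simp add: Mab sum.distrib sum.delta)
      also have "\<dots> = w a b - inv1 s C (w b a)"
        using PQ(3)[of "w a b"] by (simp add: inv)
      finally show ?thesis using True by (simp add: madj_def)
    next
      case False
      hence "w a b = 0" using w by (auto simp: mat_set_def)
      moreover have "(\<Sum>i<n. \<Sum>j<n. M i j) a b = 0"
        unfolding sum_fun_apply M_def plus_fun_apply if_not_P[OF False] by simp
      ultimately show ?thesis unfolding minus_apply madj_def if_not_P[OF False] by simp
    qed
  qed
  moreover have "(\<Sum>i<n. \<Sum>j<n. M i j) \<in> NN n"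
    by (intro NN_sum MN)
  ultimately show ?thesis by simp
qed


lemma span_sa1:
  assumes "module.span s (sa1 s C) = UNIV"
  shows "\<forall>z. \<exists>p q. p \<in> sa1 s C \<and> q \<in> sa1 s C \<and> z = p + s \<i> q"
proof
  fix z
  define K where "K = {x. \<exists>p q. p \<in> sa1 s C \<and> q \<in> sa1 s C \<and> x = p + s \<i> q}"
  have K0: "0 \<in> K" unfolding K_def using sa1_zero by force
  have Kadd: "x + y \<in> K" if xK: "x \<in> K" "y \<in> K" for x y
  proof -
    obtain a b a' b' where h: "a \<in> sa1 s C" "b \<in> sa1 s C" "a' \<in> sa1 s C" "b' \<in> sa1 s C"
      "x = a + s \<i> b" "y = a' + s \<i> b'" using xK unfolding K_def by blast
    have "x + y = (a + a') + s \<i> (b + b')"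
      by (simp add: h vs.scale_right_distrib)
    thus ?thesis unfolding K_def using h sa1_add by blast
  qed
  have Kscale: "s c x \<in> K" if xK: "x \<in> K" for x c
  proof -
    obtain a b where h: "a \<in> sa1 s C" "b \<in> sa1 s C" "x = a + s \<i> b"
      using xK unfolding K_def by blast
    let ?r = "\<lambda>t. complex_of_real t"
    have 1: "s (?r (Re c)) a - s (?r (Im c)) b \<in> sa1 s C"
      using h by (intro sa1_diff sa1_real)
    have 2: "s (?r (Im c)) a + s (?r (Re c)) b \<in> sa1 s C"
      using h by (intro sa1_add sa1_real)
    have e1: "s c z = s (?r (Re c)) z + s (\<i> * ?r (Im c)) z" for z
      using cdecomp[of c z] by simp
    have "c * \<i> = \<i> * ?r (Re c) - ?r (Im c)" by (simp add: complex_eq_iff)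
    hence e2: "s (c * \<i>) z = s (\<i> * ?r (Re c)) z - s (?r (Im c)) z" for z
      by (simp add: vs.scale_left_diff_distrib)
    have 3: "s c (a + s \<i> b) = (s (?r (Re c)) a - s (?r (Im c)) b) +
            s \<i> (s (?r (Im c)) a + s (?r (Re c)) b)"
      by (simp add: vs.scale_right_distrib e1 e2 vs.scale_right_diff_distrib)
    show ?thesis unfolding K_def using 1 2 3 h(3) by blast
  qed
  have sub: "module.subspace s K" unfolding vs.subspace_def using K0 Kadd Kscale by blast
  have base: "x \<in> K" if "x \<in> sa1 s C" for x
  proof -
    have "x = x + s \<i> 0" by simp
    thus ?thesis unfolding K_def using that sa1_zero by blast
  qed
  have "z \<in> module.span s (sa1 s C)" using assms by simp
  hence "z \<in> K" using vs.span_induct[of z "sa1 s C" "\<lambda>x. x \<in> K"] sub base by simp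
  thus "\<exists>p q. p \<in> sa1 s C \<and> q \<in> sa1 s C \<and> z = p + s \<i> q" unfolding K_def by blast
qed

lemma inv1_i:
  assumes SA: "\<forall>z. \<exists>p q. p \<in> sa1 s C \<and> q \<in> sa1 s C \<and> z = p + s \<i> q"
  shows "inv1 s C (s \<i> z) = - s \<i> (inv1 s C z)"
proof -
  obtain p q where h: "p \<in> sa1 s C" "q \<in> sa1 s C" "z = p + s \<i> q" using SA by blast
  have "s \<i> z = (- q) + s \<i> p" by (simp add: h vs.scale_right_distrib)
  hence "inv1 s C (s \<i> z) = (- q) - s \<i> p" using inv1_eq[OF sa1_neg[OF h(2)] h(1)] by simp
  also have "\<dots> = - s \<i> (p - s \<i> q)" by (simp add: vs.scale_right_diff_distrib)
  finally show ?thesis using inv1_eq[OF h(1,2)] h(3) by simp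
qed

lemma madj_i:
  assumes SA: "\<forall>z. \<exists>p q. p \<in> sa1 s C \<and> q \<in> sa1 s C \<and> z = p + s \<i> q"
  shows "madj s C n (mscale s \<i> w) = - mscale s \<i> (madj s C n w)"
  by (simp add: madj_def mscale_def fun_eq_iff inv1_i[OF SA])

end

theorem lemma2p8:
  fixes sZ :: "complex \<Rightarrow> 'a::ab_group_add \<Rightarrow> 'a"
    and C :: "nat \<Rightarrow> (nat \<Rightarrow> nat \<Rightarrow> 'a) set"
    and sV :: "complex \<Rightarrow> 'b::ab_group_add \<Rightarrow> 'b"
    and D :: "nat \<Rightarrow> (nat \<Rightarrow> nat \<Rightarrow> 'b) set"
    and \<phi> :: "'a \<Rightarrow> 'b"
    and n :: nat and x y :: "nat \<Rightarrow> nat \<Rightarrow> 'a"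
  assumes "amovs sZ C"
    and "star_closure sZ C sV D \<phi>"
    and "x \<in> mat_set n" and "y \<in> mat_set n"
  shows "(mapn \<phi> x + madj sV D n (mapn \<phi> y) \<in> D n \<longleftrightarrow> x + y \<in> C n)
    \<and> (mapn \<phi> x + madj sV D n (mapn \<phi> y) = 0 \<longleftrightarrow>
         x \<in> module.span (mscale sZ) (sa sZ C n) \<and> y \<in> module.span (mscale sZ) (sa sZ C n)
         \<and> y = - madj sZ C n x)"
proof -
  note amZ = assms(1)
  have amV: "amovs sV D" using assms(2) by (simp add: star_closure_def)
  interpret vz: vector_space sZ using amZ by (simp add: amovs_def)
  interpret vv: vector_space sV using amV by (simp add: amovs_def)
  have SA: "\<forall>z. \<exists>p q. p \<in> sa1 sV D \<and> q \<in> sa1 sV D \<and> z = p + sV \<i> q"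
    using span_sa1[OF amV] assms(2) by (simp add: star_closure_def self_adjoint_def)
  have lin: "Vector_Spaces.linear sZ sV \<phi>" using assms(2) by (simp add: star_closure_def)
  interpret mh: module_hom sZ sV \<phi> using lin by (simp add: module_hom_iff_linear)
  have RC1: "\<And>z m. z \<in> C m \<Longrightarrow> mapn \<phi> z \<in> D m"
    using assms(2) by (simp add: star_closure_def real_coe_def real_cp_def)
  have RC2: "\<And>z m. z \<in> mat_set m \<Longrightarrow> mapn \<phi> z \<in> D m \<Longrightarrow> z \<in> C m"
    using assms(2) by (simp add: star_closure_def real_coe_def)
  have map_add: "mapn \<phi> (a + b) = mapn \<phi> a + mapn \<phi> b" for a b
    by (simp add: mapn_def fun_eq_iff mh.add)
  have map_scale: "mapn \<phi> (mscale sZ c a) = mscale sV c (mapn \<phi> a)" for a c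
    by (simp add: mapn_def mscale_def fun_eq_iff mh.scale)
  have map_neg: "mapn \<phi> (- a) = - mapn \<phi> a" for a
    by (simp add: mapn_def fun_eq_iff mh.neg)
  have map_diff: "mapn \<phi> (a - b) = mapn \<phi> a - mapn \<phi> b" for a b
    by (simp add: mapn_def fun_eq_iff mh.diff)
  have map_sa: "mapn \<phi> a \<in> sa sV D m" if "a \<in> sa sZ C m" for a m
    using that RC1 by (simp add: sa_def map_scale[symmetric])
  define u where "u = mapn \<phi> x"
  define w where "w = mapn \<phi> y"
  have wm: "w \<in> mat_set n" unfolding w_def using assms(4) mh.zero by (simp add: mat_set_def mapn_def)
  have T: "w - madj sV D n w \<in> NN D n" by (rule T_NN[OF amV SA wm])
  have TD: "w - madj sV D n w \<in> D n" "- (w - madj sV D n w) \<in> D n"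
    using T unfolding NN_def[OF amV] by blast+
  have uw: "u + w = mapn \<phi> (x + y)" by (simp add: u_def w_def map_add)
  have xym: "x + y \<in> mat_set n" by (rule mat_set_add[OF assms(3,4)])
  have part1: "u + madj sV D n w \<in> D n \<longleftrightarrow> x + y \<in> C n"
  proof
    assume h: "u + madj sV D n w \<in> D n"
    have "u + w = (u + madj sV D n w) + (w - madj sV D n w)" by simp
    moreover have "(u + madj sV D n w) + (w - madj sV D n w) \<in> D n"
      by (rule C_add[OF amV h TD(1)])
    ultimately have "mapn \<phi> (x + y) \<in> D n" using uw by simp
    thus "x + y \<in> C n" by (rule RC2[OF xym])
  next
    assume h: "x + y \<in> C n"
    have "u + madj sV D n w = (u + w) + - (w - madj sV D n w)" by simp
    moreover have "(u + w) + - (w - madj sV D n w) \<in> D n"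
      unfolding uw by (rule C_add[OF amV RC1[OF h] TD(2)])
    ultimately show "u + madj sV D n w \<in> D n" by simp
  qed
  have part2: "u + madj sV D n w = 0 \<longleftrightarrow>
         x \<in> module.span (mscale sZ) (sa sZ C n) \<and> y \<in> module.span (mscale sZ) (sa sZ C n)
         \<and> y = - madj sZ C n x"
  proof
    assume h: "u + madj sV D n w = 0"
    have um: "u = - madj sV D n w" using h by (simp add: eq_neg_iff_add_eq_0)
    have iwm: "mscale sV \<i> w \<in> mat_set n" using wm by (simp add: mat_set_def mscale_def)
    have T': "mscale sV \<i> w - madj sV D n (mscale sV \<i> w) \<in> NN D n" by (rule T_NN[OF amV SA iwm])
    have T'eq: "mscale sV \<i> w - madj sV D n (mscale sV \<i> w) = mscale sV \<i> (w + madj sV D n w)"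
      unfolding madj_i[OF amV SA] by (simp add: mscale_def fun_eq_iff vv.scale_right_distrib)
    have msm: "mscale sZ c z \<in> mat_set n" if "z \<in> mat_set n" for z c
      using that by (simp add: mat_set_def mscale_def)
    have xymn: "- (x + y) \<in> mat_set n" "x - y \<in> mat_set n" using assms(3,4) by (auto simp: mat_set_def)
    have "u + w = w - madj sV D n w" using um by simp
    hence e1a: "mapn \<phi> (x + y) = w - madj sV D n w" using uw by simp
    hence e1b: "mapn \<phi> (- (x + y)) = - (w - madj sV D n w)" by (simp only: map_neg)
    have e1: "mapn \<phi> (x + y) \<in> D n" "mapn \<phi> (- (x + y)) \<in> D n"
      unfolding e1a e1b by (rule TD(1), rule TD(2))
    have p1: "x + y \<in> C n" by (rule RC2[OF xym e1(1)])
    have p2: "- (x + y) \<in> C n" by (rule RC2[OF xymn(1) e1(2)])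
    have "mapn \<phi> (mscale sZ (-\<i>) (x - y)) = mscale sV \<i> (w + madj sV D n w)"
      unfolding map_scale map_diff u_def[symmetric] w_def[symmetric] um
      by (simp add: mscale_def fun_eq_iff vv.scale_right_distrib vv.scale_right_diff_distrib)
    moreover have "mapn \<phi> (mscale sZ \<i> (x - y)) = - mscale sV \<i> (w + madj sV D n w)"
      unfolding map_scale map_diff u_def[symmetric] w_def[symmetric] um
      by (simp add: mscale_def fun_eq_iff vv.scale_right_distrib vv.scale_right_diff_distrib)
    ultimately have e2: "mapn \<phi> (mscale sZ (-\<i>) (x - y)) \<in> D n" "mapn \<phi> (mscale sZ \<i> (x - y)) \<in> D n"
      using T' T'eq by (auto simp: NN_def[OF amV])
    have s2: "x - y \<in> sa sZ C n"
      unfolding sa_def using RC2[OF msm[OF xymn(2)] e2(1)] RC2[OF msm[OF xymn(2)] e2(2)] by simp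
    define s1 where "s1 = mscale sZ (-\<i>) (x + y)"
    have "mscale sZ (-\<i>) s1 = - (x + y)" "mscale sZ \<i> s1 = x + y"
      by (simp_all add: s1_def mscale_def fun_eq_iff)
    hence s1: "s1 \<in> sa sZ C n" using p1 p2 by (simp add: sa_def)
    define a where "a = mscale sZ (complex_of_real (1/2)) (x - y)"
    define b where "b = mscale sZ (complex_of_real (1/2)) s1"
    have a: "a \<in> sa sZ C n" unfolding a_def by (rule sa_real[OF amZ s2])
    have b: "b \<in> sa sZ C n" unfolding b_def by (rule sa_real[OF amZ s1])
    have half: "sZ (1/2) t + sZ (1/2) t = t" for t
    proof -
      have "sZ (1/2) t + sZ (1/2) t = sZ (1/2 + 1/2) t" by (simp only: vz.scale_left_distrib)
      thus ?thesis by simp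
    qed
    have xe: "x = a + mscale sZ \<i> b"
      by (simp add: a_def b_def s1_def mscale_def fun_eq_iff vz.scale_right_distrib
          vz.scale_right_diff_distrib half)
    have ye: "y = - a + mscale sZ \<i> b"
      by (simp add: a_def b_def s1_def mscale_def fun_eq_iff vz.scale_right_distrib
          vz.scale_right_diff_distrib half)
    have "x \<in> module.span (mscale sZ) (sa sZ C n)" unfolding xe by (rule sa_in_span[OF amZ a b])
    moreover have "y \<in> module.span (mscale sZ) (sa sZ C n)"
      unfolding ye by (rule sa_in_span[OF amZ sa_neg[OF amZ a] b])
    moreover have "y = - madj sZ C n x" unfolding xe madj_sa[OF amZ a b] ye by simp
    ultimately show "x \<in> module.span (mscale sZ) (sa sZ C n) \<and> y \<in> module.span (mscale sZ) (sa sZ C n)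
         \<and> y = - madj sZ C n x" by blast
  next
    assume h: "x \<in> module.span (mscale sZ) (sa sZ C n) \<and> y \<in> module.span (mscale sZ) (sa sZ C n)
         \<and> y = - madj sZ C n x"
    obtain a b where ab: "a \<in> sa sZ C n" "b \<in> sa sZ C n" "x = a + mscale sZ \<i> b"
      using span_sa[OF amZ] h by blast
    have y: "y = - a + mscale sZ \<i> b" using h madj_sa[OF amZ ab(1,2)] ab(3) by simp
    have A: "mapn \<phi> a \<in> sa sV D n" "- mapn \<phi> a \<in> sa sV D n" "mapn \<phi> b \<in> sa sV D n"
      using map_sa ab sa_neg[OF amV] by auto
    have "w = - mapn \<phi> a + mscale sV \<i> (mapn \<phi> b)"
      unfolding w_def y by (simp add: map_add map_neg map_scale map_diff)
    hence "madj sV D n w = - mapn \<phi> a - mscale sV \<i> (mapn \<phi> b)"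
      using madj_sa[OF amV A(2,3)] by simp
    moreover have "u = mapn \<phi> a + mscale sV \<i> (mapn \<phi> b)"
      unfolding u_def ab(3) by (simp add: map_add map_scale)
    ultimately show "u + madj sV D n w = 0" by simp
  qed
  show ?thesis using part1 part2 by (simp add: u_def w_def)
qed

end
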